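(* Let $\mathbb{K}\in\{\mathbb{R},\mathbb{C}\}$, let $X$ be a linear space over $\mathbb{K}$ and $A\colon X\to\mathbb{K}$ a nonzero additive functional, and put $\phi(x,y)=A(x)A(y)$ for $x,y\in X$. Then a function $f\colon X\to\mathbb{K}$ satisfies $f(x+y)=f(x)f(y)-\phi(x,y)$ for all $x,y\in X$ if and only if $f(x)=\delta A(x)+1$ for all $x\in X$ with $\delta\in\{1,-1\}$.
   Context: A functional $A\colon X\to\mathbb{K}$ is additive if $A(x+y)=A(x)+A(y)$ for all $x,y\in X$ (it need not be linear). *)

theory Defs
  imports Complex_Main
begin

definition additive_fun :: "('x::ab_group_add \<Rightarrow> 'k::ab_group_add) \<Rightarrow> bool" where
  "additive_fun A \<longleftrightarrow> (\<forall>x y. A (x + y) = A x + A y)"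

end

theory Submission
  imports Defs
begin

lemma gen:
  fixes A :: "'a::ab_group_add \<Rightarrow> 'k::field" and f :: "'a \<Rightarrow> 'k"
  assumes add: "additive_fun A" and nz: "A \<noteq> (\<lambda>_. 0)"
  shows "(\<forall>x y. f (x + y) = f x * f y - A x * A y) \<longleftrightarrow>
         (\<exists>\<delta>\<in>{1, -1}. \<forall>x. f x = \<delta> * A x + 1)"
proof
  have Aadd: "\<And>x y. A (x + y) = A x + A y" using add unfolding additive_fun_def by blast
  have "A 0 + A 0 = A 0 + 0" using Aadd[of 0 0] by simp
  hence A0: "A 0 = 0" by (simp only: add_left_cancel)
  obtain x0 where a: "A x0 \<noteq> 0" using nz by auto
  assume E: "\<forall>x y. f (x + y) = f x * f y - A x * A y"
  have f0: "f 0 = 1"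
  proof (rule ccontr)
    assume ne: "f 0 \<noteq> 1"
    have "f 0 = f 0 * f 0" using E[rule_format, of 0 0] A0 by simp
    hence "f 0 = 0" using ne by (metis mult_cancel_left2 mult.commute)
    hence fz: "\<And>x. f x = 0" using E A0 by (metis add.right_neutral mult_zero_right diff_zero)
    have "A x0 * A x0 = 0" using E[rule_format, of x0 x0] fz by simp
    thus False using a by simp
  qed
  have key: "\<And>x y z. A x * A y * (f z - 1) = A y * A z * (f x - 1)"
  proof -
    fix x y z
    have "f ((x + y) + z) = f (x + (y + z))" by (simp add: add.assoc)
    hence "(f x * f y - A x * A y) * f z - (A x + A y) * A z
         = f x * (f y * f z - A y * A z) - A x * (A y + A z)"
      using E Aadd by metis
    thus "A x * A y * (f z - 1) = A y * A z * (f x - 1)"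
      by (simp add: algebra_simps)
  qed
  define c where "c = (f x0 - 1) / A x0"
  have fc: "\<And>z. f z = c * A z + 1"
  proof -
    fix z
    have "A x0 * A x0 * (f z - 1) = A x0 * A z * (f x0 - 1)" by (rule key)
    hence "A x0 * (f z - 1) = A z * (f x0 - 1)" using a by (simp add: mult.assoc)
    thus "f z = c * A z + 1" using a unfolding c_def by (simp add: field_simps)
  qed
  have "f (x0 + x0) = f x0 * f x0 - A x0 * A x0" using E by blast
  hence "(c*c - 1) * (A x0 * A x0) = 0" unfolding fc Aadd by (simp add: algebra_simps)
  hence "c * c = 1" using a by simp
  hence "c = 1 \<or> c = -1" by (metis square_eq_1_iff power2_eq_square)
  thus "\<exists>\<delta>\<in>{1, -1}. \<forall>x. f x = \<delta> * A x + 1" using fc by blast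
next
  have Aadd: "\<And>x y. A (x + y) = A x + A y" using add unfolding additive_fun_def by blast
  assume "\<exists>\<delta>\<in>{1, -1}. \<forall>x. f x = \<delta> * A x + 1"
  then obtain d where d: "d = 1 \<or> d = -1" and fd: "\<And>x. f x = d * A x + 1" by blast
  have dd: "d * d = 1" using d by auto
  show "\<forall>x y. f (x + y) = f x * f y - A x * A y"
  proof (intro allI)
    fix x y
    have "f x * f y - A x * A y = (d*d) * A x * A y + d * (A x + A y) + 1 - A x * A y"
      unfolding fd by (simp add: algebra_simps)
    also have "\<dots> = f (x + y)" unfolding dd fd Aadd by simp
    finally show "f (x + y) = f x * f y - A x * A y" by simp
  qed
qed

theorem mainTheorem10:
  shows "(\<forall>(A::'x::real_vector \<Rightarrow> real) (f::'x \<Rightarrow> real).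
            additive_fun A \<longrightarrow> A \<noteq> (\<lambda>_. 0) \<longrightarrow>
            ((\<forall>x y. f (x + y) = f x * f y - A x * A y) \<longleftrightarrow>
             (\<exists>\<delta>\<in>{1, -1}. \<forall>x. f x = \<delta> * A x + 1)))
       \<and> (\<forall>(sc::complex \<Rightarrow> 'y::ab_group_add \<Rightarrow> 'y) (A::'y \<Rightarrow> complex) (f::'y \<Rightarrow> complex).
            vector_space sc \<longrightarrow> additive_fun A \<longrightarrow> A \<noteq> (\<lambda>_. 0) \<longrightarrow>
            ((\<forall>x y. f (x + y) = f x * f y - A x * A y) \<longleftrightarrow>
             (\<exists>\<delta>\<in>{1, -1}. \<forall>x. f x = \<delta> * A x + 1)))"
  by (intro conjI allI impI gen)

end
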